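(* Let $(\mathcal{M},\varphi,\xi,\eta,g)$ be a $(2n+1)$-dimensional almost paracontact almost paracomplex Riemannian manifold whose Reeb vector field $\xi$ is torse-forming with function $f$. Suppose $\mathcal{M}$ is para-Einstein-like with constants $(a,b,c)$ and admits a para-Ricci-like soliton with potential $\xi$ and constants $(\lambda,\mu,\nu)$. Then $f$ is constant and $$f=\varepsilon\sqrt{-\frac{a+b+c}{2n}}=\varepsilon\sqrt{\frac{\lambda+\mu+\nu}{2n}},\qquad \varepsilon\in\{1,-1\}.$$
   Context: An almost paracontact almost paracomplex Riemannian (apapR) manifold $(\mathcal{M},\varphi,\xi,\eta,g)$ is a smooth $(2n+1)$-dimensional manifold with a $(1,1)$-tensor field $\varphi$, a vector field $\xi$, a 1-form $\eta$ and a Riemannian metric $g$ such that $\varphi\xi=0$, $\varphi^2=I-\eta\otimes\xi$, $\eta\circ\varphi=0$, $\eta(\xi)=1$, $\operatorname{tr}\varphi=0$, $g(\varphi x,\varphi y)=g(x,y)-\eta(x)\eta(y)$. $\nabla$ is the Levi-Civita connection of $g$ and $\rho$ its Ricci tensor. The associated metric is $\tilde g(x,y)=g(x,\varphi y)+\eta(x)\eta(y)$. $\xi$ is torse-forming with function $f$ if $\nabla_x\xi=f\,x+\alpha(x)\xi$ for a smooth function $f$ and a 1-form $\alpha$; on an apapR manifold this means $\nabla_x\xi=f\,\varphi^2x$. The manifold is para-Einstein-like with constants $(a,b,c)$ if $\rho=a\,g+b\,\tilde g+c\,\eta\otimes\eta$. It admits a para-Ricci-like soliton with potential $\xi$ and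 constants $(\lambda,\mu,\nu)$ if $\rho=-\frac12\mathcal{L}_\xi g-\lambda g-\mu\tilde g-\nu\,\eta\otimes\eta$. *)

theory Defs
  imports "HOL-Analysis.Analysis"
begin

text \<open>Local-coordinate model: the manifold is an open set U of real^'m
(coordinates x^i, i :: 'm); tensor fields are given by their components.
Vectors are real^'m, covectors (1-forms) are also represented by their
component vectors in real^'m, evaluated via the inner product.\<close>

definition partial :: "'m::finite \<Rightarrow> (real^'m \<Rightarrow> real) \<Rightarrow> real^'m \<Rightarrow> real" where
  "partial i h p = deriv (\<lambda>t. h (p + t *\<^sub>R axis i 1)) 0"

fun iter_partial :: "'m::finite list \<Rightarrow> (real^'m \<Rightarrow> real) \<Rightarrow> real^'m \<Rightarrow> real" where
  "iter_partial [] h = h"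
| "iter_partial (i # is) h = partial i (iter_partial is h)"

definition smooth_fun_on :: "(real^'m::finite) set \<Rightarrow> (real^'m \<Rightarrow> real) \<Rightarrow> bool" where
  "smooth_fun_on U h \<longleftrightarrow> (\<forall>is. iter_partial is h differentiable_on U)"

definition smooth_vec_on :: "(real^'m::finite) set \<Rightarrow> (real^'m \<Rightarrow> real^'m) \<Rightarrow> bool" where
  "smooth_vec_on U X \<longleftrightarrow> (\<forall>i. smooth_fun_on U (\<lambda>q. X q $ i))"

definition smooth_mat_on :: "(real^'m::finite) set \<Rightarrow> (real^'m \<Rightarrow> real^'m^'m) \<Rightarrow> bool" where
  "smooth_mat_on U A \<longleftrightarrow> (\<forall>i j. smooth_fun_on U (\<lambda>q. A q $ i $ j))"

definition gform :: "(real^'m::finite \<Rightarrow> real^'m^'m) \<Rightarrow> real^'m \<Rightarrow> real^'m \<Rightarrow> real^'m \<Rightarrow> real" where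
  "gform g p x y = x \<bullet> (g p *v y)"

definition christoffel :: "(real^'m::finite \<Rightarrow> real^'m^'m) \<Rightarrow> real^'m \<Rightarrow> 'm \<Rightarrow> 'm \<Rightarrow> 'm \<Rightarrow> real" where
  "christoffel g p k i j = (1/2) * (\<Sum>l\<in>UNIV. matrix_inv (g p) $ k $ l *
      (partial i (\<lambda>q. g q $ j $ l) p + partial j (\<lambda>q. g q $ i $ l) p - partial l (\<lambda>q. g q $ i $ j) p))"

definition levi_civita :: "(real^'m::finite \<Rightarrow> real^'m^'m) \<Rightarrow> real^'m \<Rightarrow> (real^'m \<Rightarrow> real^'m) \<Rightarrow> real^'m \<Rightarrow> real^'m" where
  "levi_civita g x Y p = (\<chi> k. (\<Sum>i\<in>UNIV. x $ i * partial i (\<lambda>q. Y q $ k) p)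
      + (\<Sum>i\<in>UNIV. \<Sum>j\<in>UNIV. christoffel g p k i j * x $ i * Y p $ j))"

text \<open>Ricci tensor components, for R(x,y)z = nabla_x nabla_y z - nabla_y nabla_x z - nabla_[x,y] z
  and rho(y,z) = tr (x \<mapsto> R(x,y)z).\<close>
definition ricci_comp :: "(real^'m::finite \<Rightarrow> real^'m^'m) \<Rightarrow> real^'m \<Rightarrow> 'm \<Rightarrow> 'm \<Rightarrow> real" where
  "ricci_comp g p i j =
     (\<Sum>k\<in>UNIV. partial k (\<lambda>q. christoffel g q k i j) p)
   - (\<Sum>k\<in>UNIV. partial j (\<lambda>q. christoffel g q k i k) p)
   + (\<Sum>k\<in>UNIV. \<Sum>l\<in>UNIV. christoffel g p k k l * christoffel g p l i j
                          - christoffel g p k j l * christoffel g p l i k)"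

definition ricci :: "(real^'m::finite \<Rightarrow> real^'m^'m) \<Rightarrow> real^'m \<Rightarrow> real^'m \<Rightarrow> real^'m \<Rightarrow> real" where
  "ricci g p x y = (\<Sum>i\<in>UNIV. \<Sum>j\<in>UNIV. x $ i * y $ j * ricci_comp g p i j)"

definition lie_g_comp :: "(real^'m::finite \<Rightarrow> real^'m) \<Rightarrow> (real^'m \<Rightarrow> real^'m^'m) \<Rightarrow> real^'m \<Rightarrow> 'm \<Rightarrow> 'm \<Rightarrow> real" where
  "lie_g_comp X g p i j =
     (\<Sum>k\<in>UNIV. X p $ k * partial k (\<lambda>q. g q $ i $ j) p)
   + (\<Sum>k\<in>UNIV. g p $ k $ j * partial i (\<lambda>q. X q $ k) p)
   + (\<Sum>k\<in>UNIV. g p $ i $ k * partial j (\<lambda>q. X q $ k) p)"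

definition lie_g :: "(real^'m::finite \<Rightarrow> real^'m) \<Rightarrow> (real^'m \<Rightarrow> real^'m^'m) \<Rightarrow> real^'m \<Rightarrow> real^'m \<Rightarrow> real^'m \<Rightarrow> real" where
  "lie_g X g p x y = (\<Sum>i\<in>UNIV. \<Sum>j\<in>UNIV. x $ i * y $ j * lie_g_comp X g p i j)"

definition assoc_metric :: "(real^'m::finite \<Rightarrow> real^'m^'m) \<Rightarrow> (real^'m \<Rightarrow> real^'m) \<Rightarrow> (real^'m \<Rightarrow> real^'m^'m)
     \<Rightarrow> real^'m \<Rightarrow> real^'m \<Rightarrow> real^'m \<Rightarrow> real" where
  "assoc_metric \<phi> \<eta> g p x y = gform g p x (\<phi> p *v y) + (\<eta> p \<bullet> x) * (\<eta> p \<bullet> y)"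

definition apapR :: "(real^'m::finite) set \<Rightarrow> (real^'m \<Rightarrow> real^'m^'m) \<Rightarrow> (real^'m \<Rightarrow> real^'m)
     \<Rightarrow> (real^'m \<Rightarrow> real^'m) \<Rightarrow> (real^'m \<Rightarrow> real^'m^'m) \<Rightarrow> bool" where
  "apapR U \<phi> \<xi> \<eta> g \<longleftrightarrow> open U \<and>
     smooth_mat_on U \<phi> \<and> smooth_vec_on U \<xi> \<and> smooth_vec_on U \<eta> \<and> smooth_mat_on U g \<and>
     (\<forall>p\<in>U.
        (\<forall>i j. g p $ i $ j = g p $ j $ i) \<and>
        (\<forall>v. v \<noteq> 0 \<longrightarrow> gform g p v v > 0) \<and>
        \<phi> p *v \<xi> p = 0 \<and>
        (\<forall>x. \<phi> p *v (\<phi> p *v x) = x - (\<eta> p \<bullet> x) *\<^sub>R \<xi> p) \<and>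
        (\<forall>x. \<eta> p \<bullet> (\<phi> p *v x) = 0) \<and>
        \<eta> p \<bullet> \<xi> p = 1 \<and>
        trace (\<phi> p) = 0 \<and>
        (\<forall>x y. gform g p (\<phi> p *v x) (\<phi> p *v y) = gform g p x y - (\<eta> p \<bullet> x) * (\<eta> p \<bullet> y)))"

definition torse_forming :: "(real^'m::finite) set \<Rightarrow> (real^'m \<Rightarrow> real^'m^'m) \<Rightarrow> (real^'m \<Rightarrow> real^'m)
     \<Rightarrow> (real^'m \<Rightarrow> real) \<Rightarrow> bool" where
  "torse_forming U g \<xi> f \<longleftrightarrow> smooth_fun_on U f \<and>
     (\<exists>\<alpha>. smooth_vec_on U \<alpha> \<and>
        (\<forall>p\<in>U. \<forall>x. levi_civita g x \<xi> p = f p *\<^sub>R x + (\<alpha> p \<bullet> x) *\<^sub>R \<xi> p))"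

definition para_Einstein_like :: "(real^'m::finite) set \<Rightarrow> (real^'m \<Rightarrow> real^'m^'m) \<Rightarrow> (real^'m \<Rightarrow> real^'m)
     \<Rightarrow> (real^'m \<Rightarrow> real^'m^'m) \<Rightarrow> real \<Rightarrow> real \<Rightarrow> real \<Rightarrow> bool" where
  "para_Einstein_like U \<phi> \<eta> g a b c \<longleftrightarrow>
     (\<forall>p\<in>U. \<forall>x y. ricci g p x y =
        a * gform g p x y + b * assoc_metric \<phi> \<eta> g p x y + c * (\<eta> p \<bullet> x) * (\<eta> p \<bullet> y))"

definition para_Ricci_like_soliton :: "(real^'m::finite) set \<Rightarrow> (real^'m \<Rightarrow> real^'m^'m) \<Rightarrow> (real^'m \<Rightarrow> real^'m)
     \<Rightarrow> (real^'m \<Rightarrow> real^'m) \<Rightarrow> (real^'m \<Rightarrow> real^'m^'m) \<Rightarrow> real \<Rightarrow> real \<Rightarrow> real \<Rightarrow> bool" where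
  "para_Ricci_like_soliton U \<phi> \<xi> \<eta> g lam mu nu \<longleftrightarrow>
     (\<forall>p\<in>U. \<forall>x y. ricci g p x y =
        - (1/2) * lie_g \<xi> g p x y - lam * gform g p x y - mu * assoc_metric \<phi> \<eta> g p x y
        - nu * (\<eta> p \<bullet> x) * (\<eta> p \<bullet> y))"

end

theory Submission
  imports Defs
begin


lemma line_deriv:
  fixes h :: "real^'m::finite \<Rightarrow> real"
  assumes "(h has_derivative D) (at (q + s *\<^sub>R v))"
  shows "((\<lambda>t. h (q + t *\<^sub>R v)) has_real_derivative D v) (at s)"
proof -
  have l: "((\<lambda>t. q + t *\<^sub>R v) has_derivative (\<lambda>u. u *\<^sub>R v)) (at s)"
    by (auto intro!: derivative_eq_intros)
  have "((h \<circ> (\<lambda>t. q + t *\<^sub>R v)) has_derivative (D \<circ> (\<lambda>u. u *\<^sub>R v))) (at s)"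
    by (rule diff_chain_at[OF l]) (use assms in simp)
  moreover have "linear D" using assms has_derivative_linear by blast
  then have "(D \<circ> (\<lambda>u. u *\<^sub>R v)) = (\<lambda>u. D v * u)"
    by (auto simp: linear_scale o_def)
  ultimately show ?thesis
    by (simp add: has_field_derivative_def o_def)
qed

lemma partial_eq:
  fixes h :: "real^'m::finite \<Rightarrow> real"
  assumes "(h has_derivative D) (at p)"
  shows "partial i h p = D (axis i 1)"
  unfolding partial_def
  by (rule DERIV_imp_deriv, rule line_deriv) (use assms in simp)

lemma partial_line:
  fixes h :: "real^'m::finite \<Rightarrow> real"
  assumes "h differentiable (at p)"
  shows "((\<lambda>t. h (p + t *\<^sub>R axis i 1)) has_real_derivative partial i h p) (at 0)"
proof -
  obtain D where D: "(h has_derivative D) (at p)" using assms differentiable_def by blast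
  show ?thesis using line_deriv[of h D p 0 "axis i 1"] D partial_eq[OF D] by simp
qed

lemma partial_line_at:
  fixes h :: "real^'m::finite \<Rightarrow> real"
  assumes "h differentiable (at (q + s *\<^sub>R axis i 1))"
  shows "((\<lambda>t. h (q + t *\<^sub>R axis i 1)) has_real_derivative partial i h (q + s *\<^sub>R axis i 1)) (at s)"
proof -
  obtain D where D: "(h has_derivative D) (at (q + s *\<^sub>R axis i 1))" using assms differentiable_def by blast
  show ?thesis using line_deriv[OF D] partial_eq[OF D] by simp
qed

lemma partial_local:
  fixes h1 h2 :: "real^'m::finite \<Rightarrow> real"
  assumes "open U" "p \<in> U" "\<And>q. q \<in> U \<Longrightarrow> h1 q = h2 q"
  shows "partial i h1 p = partial i h2 p"
  unfolding partial_def
proof (rule deriv_cong_ev)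
  obtain e where e: "e > 0" "ball p e \<subseteq> U" using assms(1,2) open_contains_ball by blast
  have "eventually (\<lambda>t. p + t *\<^sub>R axis i 1 \<in> U) (nhds 0)"
    unfolding eventually_nhds_metric
    by (rule exI[of _ e]) (use e in \<open>auto simp: dist_norm subset_iff\<close>)
  then show "\<forall>\<^sub>F t in nhds 0. h1 (p + t *\<^sub>R axis i 1) = h2 (p + t *\<^sub>R axis i 1)"
    by eventually_elim (use assms(3) in auto)
qed simp

lemma partial_mult:
  fixes h1 h2 :: "real^'m::finite \<Rightarrow> real"
  assumes "h1 differentiable (at p)" "h2 differentiable (at p)"
  shows "partial i (\<lambda>q. h1 q * h2 q) p = partial i h1 p * h2 p + h1 p * partial i h2 p"
  unfolding partial_def[of i "\<lambda>q. h1 q * h2 q"]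
  by (rule DERIV_imp_deriv)
     (use DERIV_mult[OF partial_line[OF assms(1)] partial_line[OF assms(2)]] in \<open>auto simp: mult.commute\<close>)

lemma partial_sum:
  fixes h :: "'k \<Rightarrow> real^'m::finite \<Rightarrow> real"
  assumes "finite S" "\<And>k. k \<in> S \<Longrightarrow> h k differentiable (at p)"
  shows "partial i (\<lambda>q. \<Sum>k\<in>S. h k q) p = (\<Sum>k\<in>S. partial i (h k) p)"
  unfolding partial_def[of i "\<lambda>q. \<Sum>k\<in>S. h k q"]
  by (rule DERIV_imp_deriv) (rule DERIV_sum, use partial_line[OF assms(2)] in auto)

lemma partial_const: "partial i (\<lambda>q. c) p = 0"
  unfolding partial_def by simp

lemma partial_add:
  fixes h1 h2 :: "real^'m::finite \<Rightarrow> real"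
  assumes "h1 differentiable (at p)" "h2 differentiable (at p)"
  shows "partial i (\<lambda>q. h1 q + h2 q) p = partial i h1 p + partial i h2 p"
  unfolding partial_def[of i "\<lambda>q. h1 q + h2 q"]
  by (rule DERIV_imp_deriv)
     (use DERIV_add[OF partial_line[OF assms(1)] partial_line[OF assms(2)]] in \<open>auto\<close>)

lemma partial_diff:
  fixes h1 h2 :: "real^'m::finite \<Rightarrow> real"
  assumes "h1 differentiable (at p)" "h2 differentiable (at p)"
  shows "partial i (\<lambda>q. h1 q - h2 q) p = partial i h1 p - partial i h2 p"
  unfolding partial_def[of i "\<lambda>q. h1 q - h2 q"]
  by (rule DERIV_imp_deriv)
     (use DERIV_diff[OF partial_line[OF assms(1)] partial_line[OF assms(2)]] in \<open>auto\<close>)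

lemma partial_cmult:
  fixes h :: "real^'m::finite \<Rightarrow> real"
  assumes "h differentiable (at p)"
  shows "partial i (\<lambda>q. c * h q) p = c * partial i h p"
  unfolding partial_def[of i "\<lambda>q. c * h q"]
  by (rule DERIV_imp_deriv)
     (use DERIV_cmult[OF partial_line[OF assms(1)]] in \<open>auto\<close>)

lemma iter_partial_append: "iter_partial (is @ js) h = iter_partial is (iter_partial js h)"
  by (induction "is") auto

lemma smooth_partial: "smooth_fun_on U h \<Longrightarrow> smooth_fun_on U (partial i h)"
  unfolding smooth_fun_on_def
  by (metis iter_partial.simps iter_partial_append)

lemma smooth_diff_at: "smooth_fun_on U h \<Longrightarrow> open U \<Longrightarrow> q \<in> U \<Longrightarrow> h differentiable (at q)"
  unfolding smooth_fun_on_def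
  by (metis iter_partial.simps(1) differentiable_on_eq_differentiable_at)




lemma mvt_square:
  fixes h :: "real^'m::finite \<Rightarrow> real"
  assumes sm: "smooth_fun_on U h" and U: "open U" and t: "0 < t"
    and inU: "\<And>s r. 0 \<le> s \<Longrightarrow> s \<le> t \<Longrightarrow> 0 \<le> r \<Longrightarrow> r \<le> t \<Longrightarrow> p + s *\<^sub>R axis a 1 + r *\<^sub>R axis b 1 \<in> U"
  shows "\<exists>\<sigma> \<tau>. 0 < \<sigma> \<and> \<sigma> < t \<and> 0 < \<tau> \<and> \<tau> < t \<and>
    h (p + t *\<^sub>R axis a 1 + t *\<^sub>R axis b 1) - h (p + t *\<^sub>R axis a 1) - h (p + t *\<^sub>R axis b 1) + h p
      = t^2 * partial b (partial a h) (p + \<sigma> *\<^sub>R axis a 1 + \<tau> *\<^sub>R axis b 1)"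
proof -
  define u where "u = (axis a 1 :: real^'m)"
  define v where "v = (axis b 1 :: real^'m)"
  define \<phi> where "\<phi> s = h ((p + t *\<^sub>R v) + s *\<^sub>R u) - h (p + s *\<^sub>R u)" for s
  have smp: "smooth_fun_on U (partial a h)" using smooth_partial[OF sm] .
  have d\<phi>: "(\<phi> has_real_derivative (partial a h ((p + t *\<^sub>R v) + s *\<^sub>R u) - partial a h (p + s *\<^sub>R u))) (at s)"
    if "0 \<le> s" "s \<le> t" for s
  proof -
    have i1: "(p + t *\<^sub>R v) + s *\<^sub>R u \<in> U" using inU[of s t] that t by (simp add: u_def v_def algebra_simps)
    have i2: "p + s *\<^sub>R u \<in> U" using inU[of s 0] that t by (simp add: u_def v_def)
    show ?thesis unfolding \<phi>_def u_def
      by (rule DERIV_diff; rule partial_line_at; rule smooth_diff_at[OF sm U])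
         (use i1 i2 in \<open>auto simp: u_def\<close>)
  qed
  obtain \<sigma> where s: "0 < \<sigma>" "\<sigma> < t"
    and e1: "\<phi> t - \<phi> 0 = (t - 0) * (partial a h ((p + t *\<^sub>R v) + \<sigma> *\<^sub>R u) - partial a h (p + \<sigma> *\<^sub>R u))"
    using MVT2[OF t, of \<phi> "\<lambda>s. partial a h ((p + t *\<^sub>R v) + s *\<^sub>R u) - partial a h (p + s *\<^sub>R u)"] d\<phi>
    by auto
  define \<psi> where "\<psi> r = partial a h ((p + \<sigma> *\<^sub>R u) + r *\<^sub>R v)" for r
  have d\<psi>: "(\<psi> has_real_derivative partial b (partial a h) ((p + \<sigma> *\<^sub>R u) + r *\<^sub>R v)) (at r)"
    if "0 \<le> r" "r \<le> t" for r
  proof -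
    have i1: "(p + \<sigma> *\<^sub>R u) + r *\<^sub>R v \<in> U" using inU[of \<sigma> r] that s by (simp add: u_def v_def)
    show ?thesis unfolding \<psi>_def v_def
      by (rule partial_line_at; rule smooth_diff_at[OF smp U]) (use i1 in \<open>auto simp: v_def\<close>)
  qed
  obtain \<tau> where tau: "0 < \<tau>" "\<tau> < t"
    and e2: "\<psi> t - \<psi> 0 = (t - 0) * partial b (partial a h) ((p + \<sigma> *\<^sub>R u) + \<tau> *\<^sub>R v)"
    using MVT2[OF t, of \<psi> "\<lambda>r. partial b (partial a h) ((p + \<sigma> *\<^sub>R u) + r *\<^sub>R v)"] d\<psi>
    by auto
  have "\<psi> t - \<psi> 0 = partial a h ((p + t *\<^sub>R v) + \<sigma> *\<^sub>R u) - partial a h (p + \<sigma> *\<^sub>R u)"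
    unfolding \<psi>_def by (simp add: algebra_simps)
  then have "\<phi> t - \<phi> 0 = t^2 * partial b (partial a h) (p + \<sigma> *\<^sub>R u + \<tau> *\<^sub>R v)"
    using e1 e2 by (simp add: power2_eq_square)
  moreover have "\<phi> t - \<phi> 0 = h (p + t *\<^sub>R u + t *\<^sub>R v) - h (p + t *\<^sub>R u) - h (p + t *\<^sub>R v) + h p"
    unfolding \<phi>_def by (simp add: algebra_simps)
  ultimately show ?thesis using s tau unfolding u_def v_def by metis
qed

lemma schwarz:
  fixes h :: "real^'m::finite \<Rightarrow> real"
  assumes sm: "smooth_fun_on U h" and U: "open U" and p: "p \<in> U"
  shows "partial a (partial b h) p = partial b (partial a h) p"
proof (rule ccontr)
  assume ne: "partial a (partial b h) p \<noteq> partial b (partial a h) p"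
  define D1 where "D1 = partial b (partial a h)"
  define D2 where "D2 = partial a (partial b h)"
  define d where "d = \<bar>D1 p - D2 p\<bar>"
  have d: "d > 0" using ne by (simp add: d_def D1_def D2_def)
  have c1: "continuous (at p) D1" unfolding D1_def
    by (rule differentiable_imp_continuous_within, rule smooth_diff_at[OF _ U p])
       (intro smooth_partial sm)
  have c2: "continuous (at p) D2" unfolding D2_def
    by (rule differentiable_imp_continuous_within, rule smooth_diff_at[OF _ U p])
       (intro smooth_partial sm)
  obtain d1 where d1: "d1 > 0" "\<And>q. dist q p < d1 \<Longrightarrow> dist (D1 q) (D1 p) < d/2"
    using c1 d unfolding continuous_at_eps_delta by (metis half_gt_zero)
  obtain d2 where d2: "d2 > 0" "\<And>q. dist q p < d2 \<Longrightarrow> dist (D2 q) (D2 p) < d/2"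
    using c2 d unfolding continuous_at_eps_delta by (metis half_gt_zero)
  obtain e where e: "e > 0" "ball p e \<subseteq> U" using U p open_contains_ball by blast
  define t where "t = Min {d1, d2, e} / 4"
  have t: "t > 0" using d1 d2 e by (simp add: t_def)
  have tl: "4 * t \<le> d1" "4 * t \<le> d2" "4 * t \<le> e" by (auto simp: t_def)
  have nb: "dist (p + s *\<^sub>R axis i 1 + r *\<^sub>R axis j 1) p \<le> 2 * t"
    if "0 \<le> s" "s \<le> t" "0 \<le> r" "r \<le> t" for s r and i j :: 'm
  proof -
    have "dist (p + s *\<^sub>R axis i 1 + r *\<^sub>R axis j 1) p = norm (s *\<^sub>R axis i 1 + r *\<^sub>R (axis j 1 :: real^'m))"
      by (simp add: dist_norm)
    also have "\<dots> \<le> norm (s *\<^sub>R (axis i 1 :: real^'m)) + norm (r *\<^sub>R (axis j 1 :: real^'m))"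
      by (rule norm_triangle_ineq)
    also have "\<dots> \<le> 2 * t" using that by simp
    finally show ?thesis .
  qed
  have inU: "p + s *\<^sub>R axis i 1 + r *\<^sub>R axis j 1 \<in> U"
    if "0 \<le> s" "s \<le> t" "0 \<le> r" "r \<le> t" for s r and i j :: 'm
  proof -
    have "dist p (p + s *\<^sub>R axis i 1 + r *\<^sub>R axis j 1) < e"
      using nb[OF that, of i j] tl t by (simp add: dist_commute)
    then show ?thesis using e by auto
  qed
  obtain \<sigma> \<tau> where st: "0 < \<sigma>" "\<sigma> < t" "0 < \<tau>" "\<tau> < t"
    and E1: "h (p + t *\<^sub>R axis a 1 + t *\<^sub>R axis b 1) - h (p + t *\<^sub>R axis a 1) - h (p + t *\<^sub>R axis b 1) + h p
      = t^2 * D1 (p + \<sigma> *\<^sub>R axis a 1 + \<tau> *\<^sub>R axis b 1)"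
    using mvt_square[OF sm U t, of p a b] inU unfolding D1_def by blast
  obtain \<sigma>' \<tau>' where st': "0 < \<sigma>'" "\<sigma>' < t" "0 < \<tau>'" "\<tau>' < t"
    and E2: "h (p + t *\<^sub>R axis b 1 + t *\<^sub>R axis a 1) - h (p + t *\<^sub>R axis b 1) - h (p + t *\<^sub>R axis a 1) + h p
      = t^2 * D2 (p + \<sigma>' *\<^sub>R axis b 1 + \<tau>' *\<^sub>R axis a 1)"
    using mvt_square[OF sm U t, of p b a] inU unfolding D2_def by blast
  have "t^2 * D1 (p + \<sigma> *\<^sub>R axis a 1 + \<tau> *\<^sub>R axis b 1) = t^2 * D2 (p + \<sigma>' *\<^sub>R axis b 1 + \<tau>' *\<^sub>R axis a 1)"
    using E1 E2 by (simp add: algebra_simps)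
  then have eq: "D1 (p + \<sigma> *\<^sub>R axis a 1 + \<tau> *\<^sub>R axis b 1) = D2 (p + \<sigma>' *\<^sub>R axis b 1 + \<tau>' *\<^sub>R axis a 1)"
    using t by simp
  have "dist (D1 (p + \<sigma> *\<^sub>R axis a 1 + \<tau> *\<^sub>R axis b 1)) (D1 p) < d/2"
    using d1(2) nb[of \<sigma> \<tau> a b] st tl t by force
  moreover have "dist (D2 (p + \<sigma>' *\<^sub>R axis b 1 + \<tau>' *\<^sub>R axis a 1)) (D2 p) < d/2"
    using d2(2) nb[of \<sigma>' \<tau>' b a] st' tl t by force
  ultimately have "\<bar>D1 p - D2 p\<bar> < d" using eq unfolding dist_real_def by linarith
  then show False by (simp add: d_def)
qed




lemma differentiable_prod':
  fixes f :: "'i \<Rightarrow> 'a::real_normed_vector \<Rightarrow> real"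
  assumes "\<And>i. i \<in> I \<Longrightarrow> f i differentiable (at x)"
  shows "(\<lambda>x. \<Prod>i\<in>I. f i x) differentiable (at x)"
proof -
  from assms obtain D where "\<And>i. i \<in> I \<Longrightarrow> (f i has_derivative D i) (at x)"
    unfolding differentiable_def by metis
  then show ?thesis unfolding differentiable_def by (blast intro: has_derivative_prod)
qed

lemma det_differentiable:
  fixes M :: "'a::real_normed_vector \<Rightarrow> real^'n::finite^'n"
  assumes "\<And>i j. (\<lambda>q. M q $ i $ j) differentiable (at p)"
  shows "(\<lambda>q. det (M q)) differentiable (at p)"
  unfolding det_def
  by (intro differentiable_sum ballI differentiable_mult differentiable_const differentiable_prod' assms) auto

definition cinv :: "real^'n::finite^'n \<Rightarrow> 'n \<Rightarrow> 'n \<Rightarrow> real" where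
  "cinv A k l = det (\<chi> i j. if j = k then (axis l 1 :: real^'n) $ i else A $ i $ j) / det A"

lemma minv: "invertible (A::real^'n::finite^'n) \<Longrightarrow> A ** matrix_inv A = mat 1 \<and> matrix_inv A ** A = mat 1"
  unfolding matrix_inv_def invertible_def by (rule someI_ex)

lemma matrix_inv_cinv:
  fixes A :: "real^'n::finite^'n"
  assumes "invertible A"
  shows "matrix_inv A $ k $ l = cinv A k l"
proof -
  have d: "det A \<noteq> 0" using assms invertible_det_nz by blast
  have "A *v (matrix_inv A *v axis l 1) = axis l 1"
    using minv[OF assms] by (simp add: matrix_vector_mul_assoc)
  then have "matrix_inv A *v axis l 1 = (\<chi> k. det(\<chi> i j. if j=k then (axis l 1 :: real^'n)$i else A$i$j) / det A)"
    using cramer[OF d] by blast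
  then have "(matrix_inv A *v axis l 1) $ k = cinv A k l" by (simp add: cinv_def)
  then show ?thesis by (simp add: matrix_vector_mult_basis column_def)
qed

lemma cinv_differentiable:
  fixes M :: "'a::real_normed_vector \<Rightarrow> real^'n::finite^'n"
  assumes "\<And>i j. (\<lambda>q. M q $ i $ j) differentiable (at p)" "det (M p) \<noteq> 0"
  shows "(\<lambda>q. cinv (M q) k l) differentiable (at p)"
  unfolding cinv_def
proof (intro differentiable_divide det_differentiable assms)
  fix i j
  show "(\<lambda>x. (\<chi> i j. if j = k then (axis l 1 :: real^'n) $ i else M x $ i $ j) $ i $ j) differentiable (at p)"
    using assms(1)[of i j] by (cases "j = k") auto
qed




lemma mult_if0: "(x::real) * (if P then y else 0) = (if P then x * y else 0)"
  "(if P then y else 0) * (x::real) = (if P then y * x else 0)" by auto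

lemma curv_alg:
  fixes x e :: "'m::finite \<Rightarrow> real" and \<Gamma> :: "'m \<Rightarrow> 'm \<Rightarrow> 'm \<Rightarrow> real"
    and d\<Gamma> :: "'m \<Rightarrow> 'm \<Rightarrow> 'm \<Rightarrow> 'm \<Rightarrow> real" and dx de :: "'m \<Rightarrow> 'm \<Rightarrow> real"
    and ddx :: "'m \<Rightarrow> 'm \<Rightarrow> 'm \<Rightarrow> real" and F :: real
  defines "W \<equiv> \<lambda>a b. F * (if a = b then 1 else 0) - F * e b * x a"
  assumes H1: "\<And>a b. dx b a = W a b - (\<Sum>c\<in>UNIV. \<Gamma> a b c * x c)"
    and H2: "\<And>a b k. ddx a b k + (\<Sum>c\<in>UNIV. d\<Gamma> a k b c * x c + \<Gamma> k b c * dx a c)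
                 = - F * (de a b * x k + e b * dx a k)"
    and H3: "\<And>a b k. ddx a b k = ddx b a k"
    and GS: "\<And>k i j. \<Gamma> k i j = \<Gamma> k j i"
    and dGS: "\<And>a k i j. d\<Gamma> a k i j = d\<Gamma> a k j i"
    and ex: "(\<Sum>i\<in>UNIV. e i * x i) = 1"
  shows "(\<Sum>i\<in>UNIV. \<Sum>j\<in>UNIV. x i * x j *
            ((\<Sum>k\<in>UNIV. d\<Gamma> k k i j) - (\<Sum>k\<in>UNIV. d\<Gamma> j k i k)
             + (\<Sum>k\<in>UNIV. \<Sum>l\<in>UNIV. \<Gamma> k k l * \<Gamma> l i j - \<Gamma> k j l * \<Gamma> l i k)))
         = - (real CARD('m) - 1) * F^2"
proof -
  define T1 where "T1 b = (\<Sum>a\<in>UNIV. \<Sum>c\<in>UNIV. \<Gamma> a b c * dx a c)" for b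
  define T2 where "T2 b = (\<Sum>a\<in>UNIV. \<Sum>c\<in>UNIV. \<Gamma> a a c * dx b c)" for b
  define L1 where "L1 b = (\<Sum>a\<in>UNIV. \<Sum>c\<in>UNIV. \<Gamma> a b c * W c a)" for b
  define L2 where "L2 b = (\<Sum>a\<in>UNIV. \<Sum>c\<in>UNIV. \<Gamma> a a c * W c b)" for b
  define Q1 where "Q1 b = (\<Sum>a\<in>UNIV. \<Sum>c\<in>UNIV. \<Sum>d\<in>UNIV. \<Gamma> a b c * \<Gamma> c a d * x d)" for b
  define Q2 where "Q2 b = (\<Sum>a\<in>UNIV. \<Sum>c\<in>UNIV. \<Sum>d\<in>UNIV. \<Gamma> a a c * \<Gamma> c b d * x d)" for b
  define D where "D b = (\<Sum>c\<in>UNIV. x c * ((\<Sum>k\<in>UNIV. d\<Gamma> k k c b) - (\<Sum>k\<in>UNIV. d\<Gamma> b k c k)))" for b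
  define K where "K b = (\<Sum>c\<in>UNIV. x c * (\<Sum>k\<in>UNIV. \<Sum>l\<in>UNIV. \<Gamma> k k l * \<Gamma> l c b - \<Gamma> k b l * \<Gamma> l c k))" for b
  define RH where "RH b = - F * (\<Sum>a\<in>UNIV. de a b * x a + e b * dx a a) + F * (\<Sum>a\<in>UNIV. de b a * x a + e a * dx b a)" for b
  have T1: "T1 b = L1 b - Q1 b" for b
    unfolding T1_def L1_def Q1_def H1
    by (simp add: algebra_simps sum_subtractf sum_distrib_left)
  have T2: "T2 b = L2 b - Q2 b" for b
    unfolding T2_def L2_def Q2_def H1
    by (simp add: algebra_simps sum_subtractf sum_distrib_left)
  have K: "K b = Q2 b - Q1 b" for b
  proof -
    have "K b = (\<Sum>c\<in>UNIV. \<Sum>k\<in>UNIV. \<Sum>l\<in>UNIV. x c * (\<Gamma> k k l * \<Gamma> l c b))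
              - (\<Sum>c\<in>UNIV. \<Sum>k\<in>UNIV. \<Sum>l\<in>UNIV. x c * (\<Gamma> k b l * \<Gamma> l c k))"
      unfolding K_def by (simp add: sum_distrib_left right_diff_distrib sum_subtractf)
    also have "(\<Sum>c\<in>UNIV. \<Sum>k\<in>UNIV. \<Sum>l\<in>UNIV. x c * (\<Gamma> k k l * \<Gamma> l c b)) = Q2 b"
    proof -
      have "(\<Sum>c\<in>UNIV. \<Sum>k\<in>UNIV. \<Sum>l\<in>UNIV. x c * (\<Gamma> k k l * \<Gamma> l c b))
          = (\<Sum>k\<in>UNIV. \<Sum>c\<in>UNIV. \<Sum>l\<in>UNIV. x c * (\<Gamma> k k l * \<Gamma> l c b))" by (rule sum.swap)
      also have "\<dots> = (\<Sum>k\<in>UNIV. \<Sum>l\<in>UNIV. \<Sum>c\<in>UNIV. x c * (\<Gamma> k k l * \<Gamma> l c b))"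
        by (rule sum.cong[OF refl], rule sum.swap)
      finally show ?thesis unfolding Q2_def
        apply simp apply (intro sum.cong refl)
        subgoal for k l c using GS[of l c b] by (simp add: mult_ac) done
    qed
    also have "(\<Sum>c\<in>UNIV. \<Sum>k\<in>UNIV. \<Sum>l\<in>UNIV. x c * (\<Gamma> k b l * \<Gamma> l c k)) = Q1 b"
    proof -
      have "(\<Sum>c\<in>UNIV. \<Sum>k\<in>UNIV. \<Sum>l\<in>UNIV. x c * (\<Gamma> k b l * \<Gamma> l c k))
          = (\<Sum>k\<in>UNIV. \<Sum>c\<in>UNIV. \<Sum>l\<in>UNIV. x c * (\<Gamma> k b l * \<Gamma> l c k))" by (rule sum.swap)
      also have "\<dots> = (\<Sum>k\<in>UNIV. \<Sum>l\<in>UNIV. \<Sum>c\<in>UNIV. x c * (\<Gamma> k b l * \<Gamma> l c k))"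
        by (rule sum.cong[OF refl], rule sum.swap)
      finally show ?thesis unfolding Q1_def
        apply simp apply (intro sum.cong refl)
        subgoal for k l c using GS[of l c k] by (simp add: mult_ac) done
    qed
    finally show ?thesis .
  qed
  have DB: "D b + T1 b - T2 b = RH b" for b
  proof -
    have s1: "(\<Sum>a\<in>UNIV. ddx a b a) + (\<Sum>a\<in>UNIV. \<Sum>c\<in>UNIV. d\<Gamma> a a b c * x c) + T1 b
        = - F * (\<Sum>a\<in>UNIV. de a b * x a + e b * dx a a)"
    proof -
      have "(\<Sum>a\<in>UNIV. ddx a b a + (\<Sum>c\<in>UNIV. d\<Gamma> a a b c * x c + \<Gamma> a b c * dx a c))
          = (\<Sum>a\<in>UNIV. - F * (de a b * x a + e b * dx a a))" by (rule sum.cong[OF refl], rule H2)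
      then show ?thesis unfolding T1_def by (simp add: sum.distrib sum_negf add.assoc flip: sum_distrib_left)
    qed
    have s2: "(\<Sum>a\<in>UNIV. ddx b a a) + (\<Sum>a\<in>UNIV. \<Sum>c\<in>UNIV. d\<Gamma> b a a c * x c) + T2 b
        = - F * (\<Sum>a\<in>UNIV. de b a * x a + e a * dx b a)"
    proof -
      have "(\<Sum>a\<in>UNIV. ddx b a a + (\<Sum>c\<in>UNIV. d\<Gamma> b a a c * x c + \<Gamma> a a c * dx b c))
          = (\<Sum>a\<in>UNIV. - F * (de b a * x a + e a * dx b a))" by (rule sum.cong[OF refl], rule H2)
      then show ?thesis unfolding T2_def by (simp add: sum.distrib sum_negf add.assoc flip: sum_distrib_left)
    qed
    have s3: "D b = (\<Sum>a\<in>UNIV. \<Sum>c\<in>UNIV. d\<Gamma> a a b c * x c) - (\<Sum>a\<in>UNIV. \<Sum>c\<in>UNIV. d\<Gamma> b a a c * x c)"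
    proof -
      have "D b = (\<Sum>c\<in>UNIV. \<Sum>k\<in>UNIV. x c * d\<Gamma> k k c b) - (\<Sum>c\<in>UNIV. \<Sum>k\<in>UNIV. x c * d\<Gamma> b k c k)"
        unfolding D_def by (simp add: sum_distrib_left right_diff_distrib sum_subtractf)
      also have "(\<Sum>c\<in>UNIV. \<Sum>k\<in>UNIV. x c * d\<Gamma> k k c b) = (\<Sum>a\<in>UNIV. \<Sum>c\<in>UNIV. d\<Gamma> a a b c * x c)"
        by (subst sum.swap) (simp add: dGS[of _ _ _ b] mult.commute)
      also have "(\<Sum>c\<in>UNIV. \<Sum>k\<in>UNIV. x c * d\<Gamma> b k c k) = (\<Sum>a\<in>UNIV. \<Sum>c\<in>UNIV. d\<Gamma> b a a c * x c)"
        by (subst sum.swap) (simp add: dGS[of b] mult.commute)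
      finally show ?thesis .
    qed
    have "(\<Sum>a\<in>UNIV. ddx a b a) = (\<Sum>a\<in>UNIV. ddx b a a)" using H3 by simp
    then show ?thesis using s1 s2 s3 unfolding RH_def by linarith
  qed
  have R: "(\<Sum>c\<in>UNIV. x c * ((\<Sum>k\<in>UNIV. d\<Gamma> k k c b) - (\<Sum>k\<in>UNIV. d\<Gamma> b k c k)
             + (\<Sum>k\<in>UNIV. \<Sum>l\<in>UNIV. \<Gamma> k k l * \<Gamma> l c b - \<Gamma> k b l * \<Gamma> l c k)))
        = RH b - L1 b + L2 b" for b
  proof -
    have "(\<Sum>c\<in>UNIV. x c * ((\<Sum>k\<in>UNIV. d\<Gamma> k k c b) - (\<Sum>k\<in>UNIV. d\<Gamma> b k c k)
             + (\<Sum>k\<in>UNIV. \<Sum>l\<in>UNIV. \<Gamma> k k l * \<Gamma> l c b - \<Gamma> k b l * \<Gamma> l c k))) = D b + K b"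
      unfolding D_def K_def by (simp add: distrib_left sum.distrib)
    then show ?thesis using DB[of b] T1[of b] T2[of b] K[of b] by linarith
  qed
  have LHS: "(\<Sum>i\<in>UNIV. \<Sum>j\<in>UNIV. x i * x j *
            ((\<Sum>k\<in>UNIV. d\<Gamma> k k i j) - (\<Sum>k\<in>UNIV. d\<Gamma> j k i k)
             + (\<Sum>k\<in>UNIV. \<Sum>l\<in>UNIV. \<Gamma> k k l * \<Gamma> l i j - \<Gamma> k j l * \<Gamma> l i k)))
        = (\<Sum>b\<in>UNIV. x b * (RH b - L1 b + L2 b))"
  proof -
    let ?M = "\<lambda>i j. ((\<Sum>k\<in>UNIV. d\<Gamma> k k i j) - (\<Sum>k\<in>UNIV. d\<Gamma> j k i k)
             + (\<Sum>k\<in>UNIV. \<Sum>l\<in>UNIV. \<Gamma> k k l * \<Gamma> l i j - \<Gamma> k j l * \<Gamma> l i k))"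
    have "(\<Sum>i\<in>UNIV. \<Sum>j\<in>UNIV. x i * x j * ?M i j) = (\<Sum>j\<in>UNIV. \<Sum>i\<in>UNIV. x i * x j * ?M i j)"
      by (rule sum.swap)
    also have "\<dots> = (\<Sum>j\<in>UNIV. x j * (\<Sum>i\<in>UNIV. x i * ?M i j))"
      by (simp only: sum_distrib_left mult.assoc mult.commute mult.left_commute)
    also have "\<dots> = (\<Sum>b\<in>UNIV. x b * (RH b - L1 b + L2 b))"
      using R by simp
    finally show ?thesis .
  qed
  define A1 where "A1 = (\<Sum>a\<in>UNIV. \<Sum>c\<in>UNIV. \<Gamma> a a c * x c)"
  define A2 where "A2 = (\<Sum>b\<in>UNIV. \<Sum>a\<in>UNIV. \<Sum>c\<in>UNIV. x b * e a * \<Gamma> a b c * x c)"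
  define A3 where "A3 = (\<Sum>b\<in>UNIV. \<Sum>a\<in>UNIV. x b * \<Gamma> a a b)"
  have ex': "(\<Sum>i\<in>UNIV. x i * e i) = 1" using ex by (simp add: mult.commute)
  have exF: "(\<Sum>a\<in>UNIV. F * (e a * x a)) = F" "(\<Sum>a\<in>UNIV. F * (x a * e a)) = F"
    using ex ex' by (simp_all flip: sum_distrib_left)
  have exx: "(\<Sum>b\<in>UNIV. \<Sum>a\<in>UNIV. F * (e b * (e a * (x b * x a)))) = F"
  proof -
    have "(\<Sum>b\<in>UNIV. \<Sum>a\<in>UNIV. F * (e b * (e a * (x b * x a)))) = (\<Sum>b\<in>UNIV. F * (e b * x b) * (\<Sum>a\<in>UNIV. e a * x a))"
      by (simp add: sum_distrib_left mult_ac)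
    then show ?thesis using ex exF by simp
  qed
  have exG: "(\<Sum>b\<in>UNIV. \<Sum>n\<in>UNIV. \<Sum>m\<in>UNIV. F * (e b * (x b * (x m * \<Gamma> n n m))))
      = (\<Sum>n\<in>UNIV. \<Sum>m\<in>UNIV. F * (x m * \<Gamma> n n m))"
  proof -
    have "(\<Sum>b\<in>UNIV. \<Sum>n\<in>UNIV. \<Sum>m\<in>UNIV. F * (e b * (x b * (x m * \<Gamma> n n m))))
      = (\<Sum>b\<in>UNIV. e b * x b * (\<Sum>n\<in>UNIV. \<Sum>m\<in>UNIV. F * (x m * \<Gamma> n n m)))"
      by (simp add: sum_distrib_left mult_ac)
    also have "\<dots> = (\<Sum>b\<in>UNIV. e b * x b) * (\<Sum>n\<in>UNIV. \<Sum>m\<in>UNIV. F * (x m * \<Gamma> n n m))"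
      by (simp add: sum_distrib_right)
    finally show ?thesis using ex by simp
  qed
  have dee: "(\<Sum>b\<in>UNIV. \<Sum>a\<in>UNIV. x b * (de a b * x a)) = (\<Sum>b\<in>UNIV. \<Sum>a\<in>UNIV. x b * (de b a * x a))"
    by (subst sum.swap) (simp add: mult_ac)
  have E1: "(\<Sum>b\<in>UNIV. x b * RH b) = - F * (\<Sum>a\<in>UNIV. dx a a) + F * (\<Sum>b\<in>UNIV. \<Sum>a\<in>UNIV. x b * (e a * dx b a))"
  proof -
    have "(\<Sum>b\<in>UNIV. x b * RH b) = - F * (\<Sum>b\<in>UNIV. \<Sum>a\<in>UNIV. x b * (de a b * x a))
        - F * ((\<Sum>b\<in>UNIV. x b * e b) * (\<Sum>a\<in>UNIV. dx a a))
        + F * (\<Sum>b\<in>UNIV. \<Sum>a\<in>UNIV. x b * (de b a * x a))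
        + F * (\<Sum>b\<in>UNIV. \<Sum>a\<in>UNIV. x b * (e a * dx b a))"
      unfolding RH_def by (simp add: algebra_simps sum.distrib sum_distrib_left sum_distrib_right sum_subtractf sum_negf)
    then show ?thesis using dee ex' by simp
  qed
  have E2: "(\<Sum>a\<in>UNIV. dx a a) = real CARD('m) * F - F - A1"
    unfolding H1 W_def A1_def using ex' exF by (simp add: sum_subtractf sum.distrib sum_distrib_left mult_if0 mult_ac)
  have E3: "(\<Sum>b\<in>UNIV. \<Sum>a\<in>UNIV. x b * (e a * dx b a)) = - A2"
    unfolding H1 W_def A2_def using ex' ex exx exF by (simp add: algebra_simps sum_subtractf sum.distrib sum_distrib_left mult_if0)
  have E4: "(\<Sum>b\<in>UNIV. x b * L1 b) = F * A3 - F * A2"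
    unfolding L1_def W_def A2_def A3_def by (simp add: algebra_simps sum_subtractf sum.distrib sum_distrib_left mult_if0 GS)
  have E5: "(\<Sum>b\<in>UNIV. x b * L2 b) = F * A3 - F * A1"
    unfolding L2_def W_def A1_def A3_def using ex' exG by (simp add: algebra_simps sum_subtractf sum.distrib sum_distrib_left mult_if0)
  have "(\<Sum>b\<in>UNIV. x b * (RH b - L1 b + L2 b)) = (\<Sum>b\<in>UNIV. x b * RH b) - (\<Sum>b\<in>UNIV. x b * L1 b) + (\<Sum>b\<in>UNIV. x b * L2 b)"
    by (simp add: algebra_simps sum.distrib sum_subtractf)
  then show ?thesis using LHS E1 E2 E3 E4 E5 by (simp add: algebra_simps power2_eq_square)
qed






lemma partial_sumU:
  fixes h :: "'k::finite \<Rightarrow> real^'m::finite \<Rightarrow> real"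
  assumes "\<And>k. h k differentiable (at p)"
  shows "partial i (\<lambda>q. \<Sum>k\<in>UNIV. h k q) p = (\<Sum>k\<in>UNIV. partial i (h k) p)"
  using partial_sum[of UNIV h p i] assms by simp








context
  fixes U :: "(real^'m::finite) set" and \<phi> g :: "real^'m \<Rightarrow> real^'m^'m"
    and \<xi> \<eta> \<alpha> :: "real^'m \<Rightarrow> real^'m" and f :: "real^'m \<Rightarrow> real"
  assumes ap: "apapR U \<phi> \<xi> \<eta> g" and fs: "smooth_fun_on U f" and als: "smooth_vec_on U \<alpha>"
    and tf: "\<forall>p\<in>U. \<forall>x. levi_civita g x \<xi> p = f p *\<^sub>R x + (\<alpha> p \<bullet> x) *\<^sub>R \<xi> p"
begin


lemma U_open: "open U" using ap by (simp add: apapR_def)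

lemma gsym: "p \<in> U \<Longrightarrow> g p $ i $ j = g p $ j $ i" using ap by (simp add: apapR_def)

lemma g_smooth: "smooth_fun_on U (\<lambda>q. g q $ i $ j)" using ap by (simp add: apapR_def smooth_mat_on_def)
lemma xi_smooth: "smooth_fun_on U (\<lambda>q. \<xi> q $ i)" using ap by (simp add: apapR_def smooth_vec_on_def)
lemma eta_smooth: "smooth_fun_on U (\<lambda>q. \<eta> q $ i)" using ap by (simp add: apapR_def smooth_vec_on_def)

lemma g_diff: "q \<in> U \<Longrightarrow> (\<lambda>q. g q $ i $ j) differentiable (at q)"
  using smooth_diff_at[OF g_smooth U_open] .
lemma xi_diff: "q \<in> U \<Longrightarrow> (\<lambda>q. \<xi> q $ i) differentiable (at q)"
  using smooth_diff_at[OF xi_smooth U_open] .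
lemma eta_diff: "q \<in> U \<Longrightarrow> (\<lambda>q. \<eta> q $ i) differentiable (at q)"
  using smooth_diff_at[OF eta_smooth U_open] .
lemma dg_diff: "q \<in> U \<Longrightarrow> partial l (\<lambda>q. g q $ i $ j) differentiable (at q)"
  using smooth_diff_at[OF smooth_partial[OF g_smooth] U_open] .
lemma dxi_diff: "q \<in> U \<Longrightarrow> partial l (\<lambda>q. \<xi> q $ i) differentiable (at q)"
  using smooth_diff_at[OF smooth_partial[OF xi_smooth] U_open] .

lemma dg_sym: "p \<in> U \<Longrightarrow> partial l (\<lambda>q. g q $ i $ j) p = partial l (\<lambda>q. g q $ j $ i) p"
  by (rule partial_local[OF U_open]) (auto simp: gsym)

lemma gform_sum: "gform g p x y = (\<Sum>i\<in>UNIV. x $ i * (\<Sum>j\<in>UNIV. g p $ i $ j * y $ j))"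
  by (simp add: gform_def inner_vec_def matrix_vector_mult_def)

lemma g_inv: assumes "p \<in> U" shows "invertible (g p)"
proof -
  have pd: "\<And>v. v \<noteq> 0 \<Longrightarrow> gform g p v v > 0" using ap assms by (simp add: apapR_def)
  have "inj ((*v) (g p))"
  proof (rule injI)
    fix v w assume "g p *v v = g p *v w"
    then have "g p *v (v - w) = 0" by (simp add: matrix_vector_mult_diff_distrib)
    then have "gform g p (v - w) (v - w) = 0" by (simp add: gform_def)
    then show "v = w" using pd[of "v - w"] by (cases "v - w = 0") auto
  qed
  then show ?thesis using matrix_left_invertible_injective invertible_left_inverse by blast
qed

lemma ginv_comp: assumes "p \<in> U"
  shows "(\<Sum>k\<in>UNIV. g p $ i $ k * matrix_inv (g p) $ k $ j) = (if i = j then 1 else 0)"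
proof -
  have "g p ** matrix_inv (g p) = mat 1" using minv[OF g_inv[OF assms]] by blast
  then have "(g p ** matrix_inv (g p)) $ i $ j = mat 1 $ i $ j" by simp
  then show ?thesis by (simp add: matrix_matrix_mult_def mat_def)
qed

lemma eta_eq: assumes "p \<in> U" shows "\<eta> p $ i = (\<Sum>j\<in>UNIV. g p $ i $ j * \<xi> p $ j)"
proof -
  have h: "\<forall>x y. gform g p (\<phi> p *v x) (\<phi> p *v y) = gform g p x y - (\<eta> p \<bullet> x) * (\<eta> p \<bullet> y)"
    "\<phi> p *v \<xi> p = 0" "\<eta> p \<bullet> \<xi> p = 1"
    using ap assms by (auto simp: apapR_def)
  have "gform g p (\<phi> p *v axis i 1) (\<phi> p *v \<xi> p) = 0" using h(2) by (simp add: gform_def)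
  then have "gform g p (axis i 1) (\<xi> p) = (\<eta> p \<bullet> axis i 1)" using h(1,3) by (metis eq_iff_diff_eq_0 mult.right_neutral)
  then show ?thesis by (simp add: gform_def inner_axis' inner_axis matrix_vector_mult_def)
qed

lemma eta_xi: "p \<in> U \<Longrightarrow> (\<Sum>i\<in>UNIV. \<eta> p $ i * \<xi> p $ i) = 1"
  using ap by (simp add: apapR_def inner_vec_def)

lemma g_xi_xi: assumes "p \<in> U" shows "gform g p (\<xi> p) (\<xi> p) = 1"
proof -
  have h: "\<forall>x y. gform g p (\<phi> p *v x) (\<phi> p *v y) = gform g p x y - (\<eta> p \<bullet> x) * (\<eta> p \<bullet> y)"
    "\<phi> p *v \<xi> p = 0" "\<eta> p \<bullet> \<xi> p = 1"
    using ap assms by (auto simp: apapR_def)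
  have "gform g p (\<phi> p *v \<xi> p) (\<phi> p *v \<xi> p) = 0" using h(2) by (simp add: gform_def)
  then show ?thesis using h(1,3) by (metis eq_iff_diff_eq_0 mult.right_neutral)
qed

lemma chr_sym: "p \<in> U \<Longrightarrow> christoffel g p k i j = christoffel g p k j i"
  unfolding christoffel_def by (simp add: dg_sym[of p _ i j] add.commute)

lemma chr_low: assumes "p \<in> U"
  shows "(\<Sum>k\<in>UNIV. g p $ l $ k * christoffel g p k i j) =
    1/2 * (partial i (\<lambda>q. g q $ j $ l) p + partial j (\<lambda>q. g q $ i $ l) p - partial l (\<lambda>q. g q $ i $ j) p)"
proof -
  let ?X = "\<lambda>m. partial i (\<lambda>q. g q $ j $ m) p + partial j (\<lambda>q. g q $ i $ m) p - partial m (\<lambda>q. g q $ i $ j) p"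
  have "(\<Sum>k\<in>UNIV. g p $ l $ k * christoffel g p k i j)
      = 1/2 * (\<Sum>m\<in>UNIV. (\<Sum>k\<in>UNIV. g p $ l $ k * matrix_inv (g p) $ k $ m) * ?X m)"
    unfolding christoffel_def sum_distrib_left sum_distrib_right
    apply (subst sum.swap)
    by (simp add: mult_ac)
  also have "\<dots> = 1/2 * ?X l" by (simp add: ginv_comp[OF assms] mult_if0)
  finally show ?thesis .
qed

lemma sum_if_out: fixes c :: "'a::finite \<Rightarrow> 'b \<Rightarrow> real" shows "(\<Sum>a\<in>UNIV. \<Sum>j\<in>UNIV. if a = i then c a j else (0::real)) = (\<Sum>j\<in>UNIV. c i j)"
proof -
  have "(\<Sum>a\<in>UNIV. \<Sum>j\<in>UNIV. if a = i then c a j else (0::real)) = (\<Sum>a\<in>UNIV. if a = i then (\<Sum>j\<in>UNIV. c a j) else 0)"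
    by (rule sum.cong) auto
  also have "\<dots> = (\<Sum>j\<in>UNIV. c i j)" by (subst sum.delta) auto
  finally show ?thesis .
qed

lemma tf_comp: assumes "p \<in> U"
  shows "partial i (\<lambda>q. \<xi> q $ k) p + (\<Sum>j\<in>UNIV. christoffel g p k i j * \<xi> p $ j)
     = f p * (if i = k then 1 else 0) + \<alpha> p $ i * \<xi> p $ k"
proof -
  have "levi_civita g (axis i 1) \<xi> p $ k = (f p *\<^sub>R axis i 1 + (\<alpha> p \<bullet> axis i 1) *\<^sub>R \<xi> p) $ k"
    using tf assms by simp
  moreover have "levi_civita g (axis i 1) \<xi> p $ k = partial i (\<lambda>q. \<xi> q $ k) p + (\<Sum>j\<in>UNIV. christoffel g p k i j * \<xi> p $ j)"
    by (simp add: levi_civita_def axis_def mult_if0 sum_if_out cong: if_cong)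
  moreover have "\<alpha> p \<bullet> axis i 1 = \<alpha> p $ i" by (simp add: inner_axis)
  ultimately show ?thesis by (cases "i = k") (auto simp: axis_def)
qed





lemma chr_diff: assumes p: "p \<in> U" shows "(\<lambda>q. christoffel g q k i j) differentiable (at p)"
proof -
  define C where "C q = (1/2) * (\<Sum>l\<in>UNIV. cinv (g q) k l *
      (partial i (\<lambda>q. g q $ j $ l) q + partial j (\<lambda>q. g q $ i $ l) q - partial l (\<lambda>q. g q $ i $ j) q))" for q
  have dn: "det (g p) \<noteq> 0" using g_inv[OF p] invertible_det_nz by blast
  have "C differentiable (at p)" unfolding C_def
    by (intro differentiable_mult differentiable_const differentiable_sum ballI cinv_differentiable
        differentiable_add differentiable_diff g_diff dg_diff p dn; simp)
  then obtain D where D: "(C has_derivative D) (at p)" unfolding differentiable_def by blast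
  have eq: "\<And>q. q \<in> U \<Longrightarrow> C q = christoffel g q k i j"
    unfolding C_def christoffel_def by (simp add: matrix_inv_cinv[OF g_inv])
  show ?thesis
    using has_derivative_transform_within_open[OF D U_open p eq] unfolding differentiable_def by blast
qed

lemma alpha: assumes p: "p \<in> U" shows "\<alpha> p $ l = - f p * \<eta> p $ l"
proof -
  define N where "N q = (\<Sum>i\<in>UNIV. \<xi> q $ i * (\<Sum>j\<in>UNIV. g q $ i $ j * \<xi> q $ j))" for q
  define dx where "dx i = partial l (\<lambda>q. \<xi> q $ i) p" for i
  define dG where "dG i j = partial l (\<lambda>q. g q $ i $ j) p" for i j
  define G where "G i j = g p $ i $ j" for i j
  define x where "x i = \<xi> p $ i" for i
  define e where "e i = \<eta> p $ i" for i
  define \<Gamma> where "\<Gamma> k i j = christoffel g p k i j" for k i j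
  have N1: "\<And>q. q \<in> U \<Longrightarrow> N q = 1" using g_xi_xi by (simp add: N_def gform_sum)
  have "partial l N p = partial l (\<lambda>q. 1) p" by (rule partial_local[OF U_open p]) (use N1 in simp)
  then have P0: "partial l N p = 0" by (simp add: partial_const)
  have inner: "partial l (\<lambda>q. \<Sum>j\<in>UNIV. g q $ i $ j * \<xi> q $ j) p = (\<Sum>j\<in>UNIV. dG i j * x j + G i j * dx j)" for i
    by (subst partial_sumU) (auto intro!: differentiable_mult g_diff xi_diff p sum.cong
         simp: partial_mult g_diff xi_diff p dG_def G_def x_def dx_def)
  have "partial l N p = (\<Sum>i\<in>UNIV. dx i * (\<Sum>j\<in>UNIV. G i j * x j) + x i * (\<Sum>j\<in>UNIV. dG i j * x j + G i j * dx j))"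
    unfolding N_def
    apply (subst partial_sumU)
     apply (intro differentiable_mult differentiable_sum ballI g_diff xi_diff p; simp)
    apply (rule sum.cong[OF refl])
    apply (subst partial_mult)
      apply (intro differentiable_mult differentiable_sum ballI g_diff xi_diff p; simp)+
    by (simp add: inner dx_def G_def x_def)
  then have Z: "0 = (\<Sum>i\<in>UNIV. dx i * e i) + (\<Sum>i\<in>UNIV. \<Sum>j\<in>UNIV. x i * dG i j * x j) + (\<Sum>i\<in>UNIV. \<Sum>j\<in>UNIV. x i * G i j * dx j)"
    using P0 eta_eq[OF p] by (simp add: e_def G_def x_def sum.distrib distrib_left sum_distrib_left mult_ac)
  have Z3: "(\<Sum>i\<in>UNIV. \<Sum>j\<in>UNIV. x i * G i j * dx j) = (\<Sum>j\<in>UNIV. dx j * e j)"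
  proof -
    have "(\<Sum>i\<in>UNIV. \<Sum>j\<in>UNIV. x i * G i j * dx j) = (\<Sum>j\<in>UNIV. \<Sum>i\<in>UNIV. x i * G i j * dx j)" by (rule sum.swap)
    also have "\<dots> = (\<Sum>j\<in>UNIV. dx j * (\<Sum>i\<in>UNIV. G j i * x i))"
      by (simp add: sum_distrib_left G_def gsym[OF p, of _ ] mult_ac)
    finally show ?thesis using eta_eq[OF p] by (simp add: e_def G_def x_def)
  qed
  have dxe: "dx i = f p * (if l = i then 1 else 0) + \<alpha> p $ l * x i - (\<Sum>j\<in>UNIV. \<Gamma> i l j * x j)" for i
    using tf_comp[OF p, of l i] by (simp add: dx_def \<Gamma>_def x_def algebra_simps)
  have S: "(\<Sum>i\<in>UNIV. \<Sum>j\<in>UNIV. \<Gamma> i l j * x j * e i) = 1/2 * (\<Sum>i\<in>UNIV. \<Sum>j\<in>UNIV. x i * dG i j * x j)"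
  proof -
    let ?d = "\<lambda>a b c. partial a (\<lambda>q. g q $ b $ c) p"
    have "(\<Sum>i\<in>UNIV. \<Sum>j\<in>UNIV. \<Gamma> i l j * x j * e i) = (\<Sum>i\<in>UNIV. \<Sum>j\<in>UNIV. \<Sum>m\<in>UNIV. x j * x m * (G m i * \<Gamma> i l j))"
      using eta_eq[OF p] gsym[OF p] by (simp add: e_def G_def x_def sum_distrib_left mult_ac)
    also have "\<dots> = (\<Sum>j\<in>UNIV. \<Sum>i\<in>UNIV. \<Sum>m\<in>UNIV. x j * x m * (G m i * \<Gamma> i l j))" by (rule sum.swap)
    also have "\<dots> = (\<Sum>j\<in>UNIV. \<Sum>m\<in>UNIV. \<Sum>i\<in>UNIV. x j * x m * (G m i * \<Gamma> i l j))"
      by (rule sum.cong[OF refl], rule sum.swap)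
    also have "\<dots> = (\<Sum>j\<in>UNIV. \<Sum>m\<in>UNIV. x j * x m * (1/2 * (dG j m + ?d j l m - ?d m l j)))"
      by (intro sum.cong refl) (simp only: G_def \<Gamma>_def dG_def chr_low[OF p] flip: sum_distrib_left)
    also have "\<dots> = 1/2 * ((\<Sum>j\<in>UNIV. \<Sum>m\<in>UNIV. x j * x m * dG j m) + (\<Sum>j\<in>UNIV. \<Sum>m\<in>UNIV. x j * x m * ?d j l m)
          - (\<Sum>j\<in>UNIV. \<Sum>m\<in>UNIV. x j * x m * ?d m l j))"
      by (simp add: algebra_simps sum.distrib sum_subtractf sum_distrib_left)
    also have "(\<Sum>j\<in>UNIV. \<Sum>m\<in>UNIV. x j * x m * ?d j l m) = (\<Sum>j\<in>UNIV. \<Sum>m\<in>UNIV. x j * x m * ?d m l j)"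
      by (subst sum.swap) (simp add: mult.commute)
    finally show ?thesis by (simp add: mult_ac)
  qed
  have ex: "(\<Sum>i\<in>UNIV. x i * e i) = 1" using eta_xi[OF p] by (simp add: x_def e_def mult.commute)
  have exa: "(\<Sum>i\<in>UNIV. e i * (x i * \<alpha> p $ l)) = \<alpha> p $ l"
  proof -
    have "(\<Sum>i\<in>UNIV. e i * (x i * \<alpha> p $ l)) = (\<Sum>i\<in>UNIV. x i * e i) * \<alpha> p $ l"
      unfolding sum_distrib_right by (rule sum.cong) (simp_all add: mult_ac)
    then show ?thesis using ex by simp
  qed
  have "(\<Sum>i\<in>UNIV. dx i * e i) = f p * e l + \<alpha> p $ l - (\<Sum>i\<in>UNIV. \<Sum>j\<in>UNIV. \<Gamma> i l j * x j * e i)"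
    using ex exa by (simp add: dxe algebra_simps sum.distrib sum_subtractf sum_distrib_left sum_distrib_right mult_if0)
  then show ?thesis using Z Z3 S by (simp add: e_def)
qed





lemma lie_half: assumes p: "p \<in> U"
  shows "(\<Sum>k\<in>UNIV. g p $ j $ k * partial i (\<lambda>q. \<xi> q $ k) p) =
     f p * g p $ j $ i - f p * \<eta> p $ i * \<eta> p $ j
     - 1/2 * (\<Sum>m\<in>UNIV. \<xi> p $ m * (partial i (\<lambda>q. g q $ m $ j) p + partial m (\<lambda>q. g q $ i $ j) p - partial j (\<lambda>q. g q $ i $ m) p))"
proof -
  have d: "partial i (\<lambda>q. \<xi> q $ k) p = f p * (if i = k then 1 else 0) + \<alpha> p $ i * \<xi> p $ k
      - (\<Sum>m\<in>UNIV. christoffel g p k i m * \<xi> p $ m)" for k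
    using tf_comp[OF p, of i k] by simp
  have "(\<Sum>k\<in>UNIV. g p $ j $ k * partial i (\<lambda>q. \<xi> q $ k) p) =
      f p * g p $ j $ i + \<alpha> p $ i * (\<Sum>k\<in>UNIV. g p $ j $ k * \<xi> p $ k)
      - (\<Sum>k\<in>UNIV. \<Sum>m\<in>UNIV. \<xi> p $ m * (g p $ j $ k * christoffel g p k i m))"
    by (simp add: d algebra_simps sum.distrib sum_subtractf sum_distrib_left mult_if0)
  also have "(\<Sum>k\<in>UNIV. \<Sum>m\<in>UNIV. \<xi> p $ m * (g p $ j $ k * christoffel g p k i m))
      = (\<Sum>m\<in>UNIV. \<xi> p $ m * (\<Sum>k\<in>UNIV. g p $ j $ k * christoffel g p k i m))"
    by (subst sum.swap) (simp add: sum_distrib_left)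
  also have "\<dots> = (\<Sum>m\<in>UNIV. \<xi> p $ m * (1/2 * (partial i (\<lambda>q. g q $ m $ j) p + partial m (\<lambda>q. g q $ i $ j) p - partial j (\<lambda>q. g q $ i $ m) p)))"
    by (simp only: chr_low[OF p])
  finally show ?thesis
    using eta_eq[OF p, of j] alpha[OF p, of i] by (simp add: sum_distrib_left sum_negf mult_ac)
qed

lemma lie: assumes p: "p \<in> U"
  shows "lie_g_comp \<xi> g p i j = 2 * f p * g p $ i $ j - 2 * f p * \<eta> p $ i * \<eta> p $ j"
proof -
  have s1: "(\<Sum>k\<in>UNIV. g p $ k $ j * partial i (\<lambda>q. \<xi> q $ k) p) = (\<Sum>k\<in>UNIV. g p $ j $ k * partial i (\<lambda>q. \<xi> q $ k) p)"
    using gsym[OF p] by simp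
  have r1: "\<And>m. partial m (\<lambda>q. g q $ j $ i) p = partial m (\<lambda>q. g q $ i $ j) p"
    and r2: "\<And>m. partial i (\<lambda>q. g q $ j $ m) p = partial i (\<lambda>q. g q $ m $ j) p"
    and r3: "\<And>m. partial j (\<lambda>q. g q $ i $ m) p = partial j (\<lambda>q. g q $ m $ i) p"
    using dg_sym[OF p] by auto
  show ?thesis
    unfolding lie_g_comp_def s1 lie_half[OF p, of j i] lie_half[OF p, of i j]
    using gsym[OF p, of i j]
    by (simp add: r1 r2 r3 algebra_simps sum.distrib sum_subtractf sum_distrib_left)
qed


lemma lie_g_expand: assumes p: "p \<in> U"
  shows "lie_g \<xi> g p x y = 2 * f p * gform g p x y - 2 * f p * (\<eta> p \<bullet> x) * (\<eta> p \<bullet> y)"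
proof -
  have "lie_g \<xi> g p x y = (\<Sum>i\<in>UNIV. \<Sum>j\<in>UNIV. x $ i * y $ j * (2 * f p * g p $ i $ j - 2 * f p * \<eta> p $ i * \<eta> p $ j))"
    unfolding lie_g_def using lie[OF p] by simp
  also have "\<dots> = 2 * f p * (\<Sum>i\<in>UNIV. \<Sum>j\<in>UNIV. x $ i * (g p $ i $ j * y $ j))
      - 2 * f p * (\<Sum>i\<in>UNIV. \<Sum>j\<in>UNIV. (\<eta> p $ i * x $ i) * (\<eta> p $ j * y $ j))"
    by (simp add: algebra_simps sum_subtractf sum_distrib_left)
  also have "(\<Sum>i\<in>UNIV. \<Sum>j\<in>UNIV. (\<eta> p $ i * x $ i) * (\<eta> p $ j * y $ j))
      = (\<Sum>i\<in>UNIV. \<eta> p $ i * x $ i) * (\<Sum>j\<in>UNIV. \<eta> p $ j * y $ j)"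
    by (rule sum_product[symmetric])
  finally have L: "lie_g \<xi> g p x y = 2 * f p * (\<Sum>i\<in>UNIV. \<Sum>j\<in>UNIV. x $ i * (g p $ i $ j * y $ j))
      - 2 * f p * ((\<Sum>i\<in>UNIV. \<eta> p $ i * x $ i) * (\<Sum>j\<in>UNIV. \<eta> p $ j * y $ j))" .
  have G: "gform g p x y = (\<Sum>i\<in>UNIV. \<Sum>j\<in>UNIV. x $ i * (g p $ i $ j * y $ j))"
    by (simp add: gform_sum sum_distrib_left)
  have I: "\<eta> p \<bullet> x = (\<Sum>i\<in>UNIV. \<eta> p $ i * x $ i)" "\<eta> p \<bullet> y = (\<Sum>j\<in>UNIV. \<eta> p $ j * y $ j)"
    by (simp_all add: inner_vec_def)
  show ?thesis by (simp only: L G I mult.assoc)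
qed

lemma f_val:
  assumes p: "p \<in> U" and card: "CARD('m) = 2 * n + 1" and n: "n \<ge> 1"
    and PE: "para_Einstein_like U \<phi> \<eta> g a b c"
    and PS: "para_Ricci_like_soliton U \<phi> \<xi> \<eta> g lam mu nu"
  shows "f p = - (a + lam)"
proof -
  define A where "A = a + f p + lam"
  define B where "B = b + mu"
  define C where "C = c + nu - f p"
  have Z: "A * gform g p x y + B * assoc_metric \<phi> \<eta> g p x y + C * (\<eta> p \<bullet> x) * (\<eta> p \<bullet> y) = 0" for x y
  proof -
    have "ricci g p x y = a * gform g p x y + b * assoc_metric \<phi> \<eta> g p x y + c * (\<eta> p \<bullet> x) * (\<eta> p \<bullet> y)"
      using PE p by (simp add: para_Einstein_like_def)
    moreover have "ricci g p x y = - (1/2) * lie_g \<xi> g p x y - lam * gform g p x y - mu * assoc_metric \<phi> \<eta> g p x y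
        - nu * (\<eta> p \<bullet> x) * (\<eta> p \<bullet> y)"
      using PS p by (simp add: para_Ricci_like_soliton_def)
    ultimately show ?thesis unfolding A_def B_def C_def lie_g_expand[OF p] by (simp add: algebra_simps)
  qed
  have apd: "\<phi> p *v \<xi> p = 0" "\<eta> p \<bullet> \<xi> p = 1" "trace (\<phi> p) = 0" using ap p by (auto simp: apapR_def)
  have Z1: "A + B + C = 0"
    using Z[of "\<xi> p" "\<xi> p"] g_xi_xi[OF p] apd by (simp add: assoc_metric_def gform_def)
  define H where "H = matrix_inv (g p)"
  have HG: "(\<Sum>i\<in>UNIV. H $ j $ i * g p $ i $ k) = (if j = k then 1 else 0)" for j k
  proof -
    have "H ** g p = mat 1" using minv[OF g_inv[OF p]] H_def by blast
    then have "(H ** g p) $ j $ k = mat 1 $ j $ k" by simp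
    then show ?thesis by (simp add: matrix_matrix_mult_def mat_def)
  qed
  have Zc: "A * g p $ i $ j + B * ((\<Sum>k\<in>UNIV. g p $ i $ k * \<phi> p $ k $ j) + \<eta> p $ i * \<eta> p $ j)
      + C * (\<eta> p $ i * \<eta> p $ j) = 0" for i j
    using Z[of "axis i 1" "axis j 1"]
    by (simp add: assoc_metric_def gform_def inner_vec_def axis_def mult_if0
        matrix_vector_mult_def mult.assoc)
  have "0 = (\<Sum>j\<in>UNIV. \<Sum>i\<in>UNIV. H $ j $ i * (A * g p $ i $ j + B * ((\<Sum>k\<in>UNIV. g p $ i $ k * \<phi> p $ k $ j) + \<eta> p $ i * \<eta> p $ j)
      + C * (\<eta> p $ i * \<eta> p $ j)))"
    using Zc by simp
  also have "\<dots> = A * (\<Sum>j\<in>UNIV. \<Sum>i\<in>UNIV. H $ j $ i * g p $ i $ j)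
      + B * (\<Sum>j\<in>UNIV. \<Sum>k\<in>UNIV. (\<Sum>i\<in>UNIV. H $ j $ i * g p $ i $ k) * \<phi> p $ k $ j)
      + (B + C) * (\<Sum>j\<in>UNIV. \<Sum>i\<in>UNIV. H $ j $ i * \<eta> p $ i * \<eta> p $ j)"
  proof -
    have m: "(\<Sum>i\<in>UNIV. H $ j $ i * (\<Sum>k\<in>UNIV. g p $ i $ k * \<phi> p $ k $ j)) = (\<Sum>k\<in>UNIV. (\<Sum>i\<in>UNIV. H $ j $ i * g p $ i $ k) * \<phi> p $ k $ j)" for j
    proof -
      have "(\<Sum>i\<in>UNIV. H $ j $ i * (\<Sum>k\<in>UNIV. g p $ i $ k * \<phi> p $ k $ j)) = (\<Sum>i\<in>UNIV. \<Sum>k\<in>UNIV. H $ j $ i * g p $ i $ k * \<phi> p $ k $ j)"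
        by (simp add: sum_distrib_left mult.assoc)
      also have "\<dots> = (\<Sum>k\<in>UNIV. \<Sum>i\<in>UNIV. H $ j $ i * g p $ i $ k * \<phi> p $ k $ j)" by (rule sum.swap)
      finally show ?thesis by (simp add: sum_distrib_right)
    qed
    have "(\<Sum>j\<in>UNIV. \<Sum>i\<in>UNIV. H $ j $ i * (A * g p $ i $ j + B * ((\<Sum>k\<in>UNIV. g p $ i $ k * \<phi> p $ k $ j) + \<eta> p $ i * \<eta> p $ j)
      + C * (\<eta> p $ i * \<eta> p $ j))) = (\<Sum>j\<in>UNIV. \<Sum>i\<in>UNIV. A * (H $ j $ i * g p $ i $ j)
        + B * (H $ j $ i * (\<Sum>k\<in>UNIV. g p $ i $ k * \<phi> p $ k $ j)) + (B + C) * (H $ j $ i * \<eta> p $ i * \<eta> p $ j))"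
      by (intro sum.cong refl) (simp add: algebra_simps)
    also have "\<dots> = A * (\<Sum>j\<in>UNIV. \<Sum>i\<in>UNIV. H $ j $ i * g p $ i $ j)
      + B * (\<Sum>j\<in>UNIV. \<Sum>i\<in>UNIV. H $ j $ i * (\<Sum>k\<in>UNIV. g p $ i $ k * \<phi> p $ k $ j))
      + (B + C) * (\<Sum>j\<in>UNIV. \<Sum>i\<in>UNIV. H $ j $ i * \<eta> p $ i * \<eta> p $ j)"
      by (simp only: sum.distrib sum_distrib_left)
    finally show ?thesis by (simp only: m)
  qed
  also have "(\<Sum>j\<in>UNIV. \<Sum>i\<in>UNIV. H $ j $ i * g p $ i $ j) = real CARD('m)"
    using HG by simp
  also have "(\<Sum>j\<in>UNIV. \<Sum>k\<in>UNIV. (\<Sum>i\<in>UNIV. H $ j $ i * g p $ i $ k) * \<phi> p $ k $ j) = 0"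
    using apd(3) by (simp add: HG mult_if0 trace_def)
  also have "(\<Sum>j\<in>UNIV. \<Sum>i\<in>UNIV. H $ j $ i * \<eta> p $ i * \<eta> p $ j) = 1"
  proof -
    have He: "(\<Sum>i\<in>UNIV. H $ j $ i * \<eta> p $ i) = \<xi> p $ j" for j
    proof -
      have "(\<Sum>i\<in>UNIV. H $ j $ i * \<eta> p $ i) = (\<Sum>i\<in>UNIV. \<Sum>m\<in>UNIV. H $ j $ i * g p $ i $ m * \<xi> p $ m)"
        using eta_eq[OF p] by (simp add: sum_distrib_left mult.assoc)
      also have "\<dots> = (\<Sum>m\<in>UNIV. \<Sum>i\<in>UNIV. H $ j $ i * g p $ i $ m * \<xi> p $ m)" by (rule sum.swap)
      also have "\<dots> = (\<Sum>m\<in>UNIV. (\<Sum>i\<in>UNIV. H $ j $ i * g p $ i $ m) * \<xi> p $ m)"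
        by (simp add: sum_distrib_right)
      finally show ?thesis by (simp add: HG mult_if0)
    qed
    have "(\<Sum>j\<in>UNIV. \<Sum>i\<in>UNIV. H $ j $ i * \<eta> p $ i * \<eta> p $ j) = (\<Sum>j\<in>UNIV. (\<Sum>i\<in>UNIV. H $ j $ i * \<eta> p $ i) * \<eta> p $ j)"
      by (simp add: sum_distrib_right)
    also have "\<dots> = (\<Sum>j\<in>UNIV. \<eta> p $ j * \<xi> p $ j)" by (rule sum.cong[OF refl]) (subst He, simp)
    finally show ?thesis using eta_xi[OF p] by simp
  qed
  finally have "A * real CARD('m) + B + C = 0" by simp
  moreover have "A * (real CARD('m) - 1) = A * real CARD('m) - A" by (simp add: right_diff_distrib)
  ultimately have "A * (real CARD('m) - 1) = 0" using Z1 by linarith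
  moreover have "real CARD('m) - 1 \<noteq> 0" using card n by simp
  ultimately have "A = 0" by simp
  then show ?thesis by (simp add: A_def)
qed





lemma ricci_xi:
  assumes Fc: "\<And>q. q \<in> U \<Longrightarrow> f q = F" and p: "p \<in> U"
  shows "ricci g p (\<xi> p) (\<xi> p) = - (real CARD('m) - 1) * F^2"
proof -
  define x where "x c = \<xi> p $ c" for c
  define e where "e c = \<eta> p $ c" for c
  define \<Gamma> where "\<Gamma> k i j = christoffel g p k i j" for k i j
  define d\<Gamma> where "d\<Gamma> a k i j = partial a (\<lambda>q. christoffel g q k i j) p" for a k i j
  define dx where "dx a c = partial a (\<lambda>q. \<xi> q $ c) p" for a c
  define ddx where "ddx a b k = partial a (partial b (\<lambda>q. \<xi> q $ k)) p" for a b k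
  define de where "de a b = partial a (\<lambda>q. \<eta> q $ b) p" for a b
  have tfq: "partial b (\<lambda>q. \<xi> q $ k) q + (\<Sum>c\<in>UNIV. christoffel g q k b c * \<xi> q $ c)
      = F * (if b = k then 1 else 0) - F * (\<eta> q $ b * \<xi> q $ k)" if q: "q \<in> U" for q b k
    using tf_comp[OF q, of b k] alpha[OF q, of b] Fc[OF q] by simp
  have H1: "dx b a = F * (if a = b then 1 else 0) - F * e b * x a - (\<Sum>c\<in>UNIV. \<Gamma> a b c * x c)" for a b
    using tfq[OF p, of b a] by (auto simp: dx_def e_def x_def \<Gamma>_def algebra_simps)
  have H2: "ddx a b k + (\<Sum>c\<in>UNIV. d\<Gamma> a k b c * x c + \<Gamma> k b c * dx a c) = - F * (de a b * x k + e b * dx a k)" for a b k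
  proof -
    have dsum: "(\<lambda>q. \<Sum>c\<in>UNIV. christoffel g q k b c * \<xi> q $ c) differentiable (at p)"
      by (intro differentiable_sum ballI differentiable_mult chr_diff xi_diff p; simp)
    have "partial a (\<lambda>q. partial b (\<lambda>q. \<xi> q $ k) q + (\<Sum>c\<in>UNIV. christoffel g q k b c * \<xi> q $ c)) p
        = partial a (\<lambda>q. F * (if b = k then 1 else 0) - F * (\<eta> q $ b * \<xi> q $ k)) p"
      by (rule partial_local[OF U_open p]) (rule tfq)
    moreover have "partial a (\<lambda>q. partial b (\<lambda>q. \<xi> q $ k) q + (\<Sum>c\<in>UNIV. christoffel g q k b c * \<xi> q $ c)) p
        = ddx a b k + (\<Sum>c\<in>UNIV. d\<Gamma> a k b c * x c + \<Gamma> k b c * dx a c)"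
      apply (subst partial_add[OF dxi_diff[OF p] dsum])
      apply (subst partial_sumU)
       apply (intro differentiable_mult chr_diff xi_diff p)
      apply (subst partial_mult[OF chr_diff[OF p] xi_diff[OF p]])+
      by (simp add: ddx_def d\<Gamma>_def x_def \<Gamma>_def dx_def)
    moreover have "partial a (\<lambda>q. F * (if b = k then 1 else 0) - F * (\<eta> q $ b * \<xi> q $ k)) p
        = - F * (de a b * x k + e b * dx a k)"
      apply (subst partial_diff)
        apply (intro differentiable_const)
       apply (intro differentiable_mult differentiable_const eta_diff xi_diff p)
      apply (subst partial_const)
      apply (subst partial_cmult)
       apply (intro differentiable_mult eta_diff xi_diff p)
      apply (subst partial_mult[OF eta_diff[OF p] xi_diff[OF p]])
      by (simp add: partial_const de_def x_def e_def dx_def)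
    ultimately show ?thesis by simp
  qed
  have H3: "ddx a b k = ddx b a k" for a b k
    unfolding ddx_def by (rule schwarz[OF xi_smooth U_open p])
  have GS: "\<Gamma> k i j = \<Gamma> k j i" for k i j unfolding \<Gamma>_def by (rule chr_sym[OF p])
  have dGS: "d\<Gamma> a k i j = d\<Gamma> a k j i" for a k i j
    unfolding d\<Gamma>_def by (rule partial_local[OF U_open p]) (rule chr_sym)
  have ex: "(\<Sum>i\<in>UNIV. e i * x i) = 1" using eta_xi[OF p] by (simp add: e_def x_def)
  have "(\<Sum>i\<in>UNIV. \<Sum>j\<in>UNIV. x i * x j *
            ((\<Sum>k\<in>UNIV. d\<Gamma> k k i j) - (\<Sum>k\<in>UNIV. d\<Gamma> j k i k)
             + (\<Sum>k\<in>UNIV. \<Sum>l\<in>UNIV. \<Gamma> k k l * \<Gamma> l i j - \<Gamma> k j l * \<Gamma> l i k)))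
         = - (real CARD('m) - 1) * F^2"
    by (rule curv_alg[where dx = dx and ddx = ddx and de = de, OF H1 H2 H3 GS dGS ex])
  then show ?thesis
    by (simp add: ricci_def ricci_comp_def x_def d\<Gamma>_def \<Gamma>_def)
qed


end

theorem mainTheorem10:
  fixes U :: "(real^'m::finite) set"
    and \<phi> g :: "real^'m \<Rightarrow> real^'m^'m"
    and \<xi> \<eta> :: "real^'m \<Rightarrow> real^'m"
    and f :: "real^'m \<Rightarrow> real"
    and n :: nat
    and a b c lam mu nu :: real
  assumes "n \<ge> 1"
    and "CARD('m) = 2 * n + 1"
    and "apapR U \<phi> \<xi> \<eta> g"
    and "torse_forming U g \<xi> f"
    and "para_Einstein_like U \<phi> \<eta> g a b c"
    and "para_Ricci_like_soliton U \<phi> \<xi> \<eta> g lam mu nu"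
  shows "(\<exists>C. \<forall>p\<in>U. f p = C) \<and>
         (\<exists>\<epsilon>\<in>{1, -1::real}. \<forall>p\<in>U.
            f p = \<epsilon> * sqrt (- (a + b + c) / (2 * real n)) \<and>
            f p = \<epsilon> * sqrt ((lam + mu + nu) / (2 * real n)))"
  proof -
  from assms(4) obtain \<alpha> where fs: "smooth_fun_on U f" and als: "smooth_vec_on U \<alpha>"
    and tf: "\<forall>p\<in>U. \<forall>x. levi_civita g x \<xi> p = f p *\<^sub>R x + (\<alpha> p \<bullet> x) *\<^sub>R \<xi> p"
    unfolding torse_forming_def by blast
  note ap = assms(3)
  define F where "F = - (a + lam)"
  have Fc: "\<And>q. q \<in> U \<Longrightarrow> f q = F"
    unfolding F_def by (rule f_val[OF ap fs als tf _ assms(2) assms(1) assms(5) assms(6)])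
  show ?thesis
  proof (cases "U = {}")
    case True
    then show ?thesis by auto
  next
    case False
    then obtain p where p: "p \<in> U" by blast
    have R: "ricci g p (\<xi> p) (\<xi> p) = - (real CARD('m) - 1) * F^2"
      by (rule ricci_xi[OF ap fs als tf Fc p])
    have apd: "\<phi> p *v \<xi> p = 0" "\<eta> p \<bullet> \<xi> p = 1" using ap p by (auto simp: apapR_def)
    have gxx: "gform g p (\<xi> p) (\<xi> p) = 1" by (rule g_xi_xi[OF ap fs als tf p])
    have axx: "assoc_metric \<phi> \<eta> g p (\<xi> p) (\<xi> p) = 1"
      using apd by (simp add: assoc_metric_def gform_def)
    have E: "ricci g p (\<xi> p) (\<xi> p) = a + b + c"
      using assms(5) p gxx axx apd by (simp add: para_Einstein_like_def)
    have lxx: "lie_g \<xi> g p (\<xi> p) (\<xi> p) = 0"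
      using lie_g_expand[OF ap fs als tf p] gxx apd by simp
    have S: "ricci g p (\<xi> p) (\<xi> p) = - (lam + mu + nu)"
      using assms(6) p gxx axx apd lxx by (simp add: para_Ricci_like_soliton_def)
    have cn: "real CARD('m) - 1 = 2 * real n" using assms(2) by simp
    have npos: "real n > 0" using assms(1) by simp
    have e1: "- (a + b + c) / (2 * real n) = F^2" using R E cn npos by (simp add: field_simps)
    have e2: "(lam + mu + nu) / (2 * real n) = F^2" using R S cn npos by (simp add: field_simps)
    define \<epsilon> where "\<epsilon> = (if F \<ge> 0 then 1 else (-1::real))"
    have eps: "\<epsilon> \<in> {1, -1}" by (simp add: \<epsilon>_def)
    have Fe: "F = \<epsilon> * sqrt (F^2)" by (simp add: \<epsilon>_def)
    show ?thesis
    proof (intro conjI)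
      show "\<exists>C. \<forall>p\<in>U. f p = C" using Fc by blast
      show "\<exists>\<epsilon>\<in>{1, -1::real}. \<forall>p\<in>U.
            f p = \<epsilon> * sqrt (- (a + b + c) / (2 * real n)) \<and>
            f p = \<epsilon> * sqrt ((lam + mu + nu) / (2 * real n))"
        using eps Fc Fe e1 e2 by metis
    qed
  qed
qed


end
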